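(* Let $N\in\mathbb{N}$ be composite and $p$ a prime factor of $N$ with $p\le b$ for some $b\le N/5$. Let $r,m\in\mathbb{N}$ with $2\le m<p$, $\gcd(N,m)=1$ and $r=p\bmod m$, and put $d=\lceil (b/m)^{1/2}\rceil$. Then the sets \[\{m^{-1}r-n\bmod N:1\le n\le d\}\quad\text{and}\quad\{-dn\bmod N:1\le n\le d\}\] (with $m^{-1}$ the inverse of $m$ modulo $N$) are disjoint subsets of $\{0,\dots,N-1\}$, and there exist $i,j\in\{1,\dots,d\}$ such that $m^{-1}r-j\equiv -di\pmod p$; that is, they form a solution to the Covering Problem for $N$ and $d$.
   Context: Covering Problem: for $N$ and $d$, a solution is a pair of disjoint subsets $\{b_n:1\le n\le d\}$ and $\{s_n:1\le n\le d\}$ of $\{0,\dots,N-1\}$ such that, if $N$ is composite, there exist $i,j\in\{1,\dots,d\}$ and a prime factor $p$ of $N$ with $b_i\equiv s_j\pmod p$. *)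

theory Defs
  imports Complex_Main "HOL-Number_Theory.Number_Theory"
begin

definition covering_solution :: "nat \<Rightarrow> nat \<Rightarrow> (nat \<Rightarrow> int) \<Rightarrow> (nat \<Rightarrow> int) \<Rightarrow> bool" where
  "covering_solution N d bs ss \<longleftrightarrow>
     bs ` {1..d} \<subseteq> {0..<int N} \<and> ss ` {1..d} \<subseteq> {0..<int N} \<and>
     bs ` {1..d} \<inter> ss ` {1..d} = {} \<and>
     ((N > 1 \<and> \<not> prime N) \<longrightarrow>
        (\<exists>i\<in>{1..d}. \<exists>j\<in>{1..d}. \<exists>p. prime p \<and> p dvd N \<and> [bs i = ss j] (mod int p)))"

end

theory Submission
  imports Defs
begin

theorem corollary4p4:
  fixes N p m r :: nat and b :: real and d :: nat
  assumes composite: "N > 1" "\<not> prime N"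
    and p_prime: "prime p" and p_dvd: "p dvd N"
    and p_le_b: "real p \<le> b" and b_le: "b \<le> real N / 5"
    and m_ge: "2 \<le> m" and m_lt: "m < p" and cop: "gcd N m = 1"
    and r_def: "r = p mod m"
    and d_def: "d = nat \<lceil>sqrt (b / real m)\<rceil>"
  defines "minv \<equiv> modular_inverse (int N) (int m)"
  shows "(\<lambda>n. (minv * int r - int n) mod int N) ` {1..d} \<subseteq> {0..<int N}
       \<and> (\<lambda>n. (- int d * int n) mod int N) ` {1..d} \<subseteq> {0..<int N}
       \<and> (\<lambda>n. (minv * int r - int n) mod int N) ` {1..d}
           \<inter> (\<lambda>n. (- int d * int n) mod int N) ` {1..d} = {}
       \<and> (\<exists>i\<in>{1..d}. \<exists>j\<in>{1..d}. [minv * int r - int j = - int d * int i] (mod int p))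
       \<and> covering_solution N d (\<lambda>n. (minv * int r - int n) mod int N)
                              (\<lambda>n. (- int d * int n) mod int N)"
proof -
  define q where "q = p div m"
  have pqr: "p = q * m + r" unfolding q_def r_def by simp
  have "\<not> m dvd p" using p_prime m_ge m_lt
    unfolding prime_nat_iff by auto
  hence rpos: "r > 0" unfolding r_def by (simp add: dvd_eq_mod_eq_0)
  have rlt: "r < m" unfolding r_def using m_ge by simp
  have "coprime N m" using cop coprime_iff_gcd_eq_1 by blast
  hence "coprime m N" using coprime_commute by blast
  hence cmN: "coprime (int m) (int N)" using coprime_int_iff by blast
  have inv: "[int m * minv = 1] (mod int N)"
    unfolding minv_def by (rule cong_modular_inverse1[OF cmN])
  have Npos: "N > 0" using composite by simp
  have mpos: "real m > 0" using m_ge by simp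
  define s where "s = sqrt (b / real m)"
  have "real p > 0" using m_lt by simp
  hence bpos: "b > 0" using p_le_b by linarith
  have spos: "s > 0" unfolding s_def using bpos mpos by simp
  have rd: "real d = real_of_int \<lceil>s\<rceil>" unfolding d_def s_def[symmetric] using spos by simp
  have ds: "s \<le> real d" "real d < s + 1" using ceiling_correct[of s] unfolding rd by linarith+
  have d1: "d \<ge> 1" using ds spos by linarith
  have s2: "s^2 = b / real m" unfolding s_def using bpos mpos by simp
  have "real m * s^2 = b" using s2 mpos by simp
  have "real q * real m < real p"
  proof -
    have "q * m < p" using pqr rpos by linarith
    hence "real (q * m) < real p" by (simp only: of_nat_less_iff)
    thus ?thesis by simp
  qed
  hence "real q * real m < real m * s^2" using \<open>real m * s^2 = b\<close> p_le_b by linarith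
  hence "real q < s^2" using mpos by (simp add: mult.commute)
  also have "s^2 \<le> (real d)^2" using ds spos by (intro power_mono) auto
  finally have "real q < real (d*d)" by (simp add: power2_eq_square)
  hence qlt: "q < d * d" by linarith
  have mb: "real m \<le> b" using m_lt p_le_b by (metis less_imp_le of_nat_le_iff order_trans)
  have msb: "real m * s \<le> b"
  proof -
    have "(real m * s)^2 = real m * (real m * s^2)" by (simp add: power2_eq_square mult_ac)
    also have "\<dots> = real m * b" using \<open>real m * s^2 = b\<close> by simp
    also have "\<dots> \<le> b * b" using mult_right_mono[OF mb, of b] bpos by simp
    finally have "(real m * s)^2 \<le> b^2" by (simp add: power2_eq_square)
    from power2_le_imp_le[OF this] bpos show ?thesis by simp
  qed
  have "(real d)^2 < (s+1)^2"
    using ds(2) by (rule power_strict_mono) auto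
  hence "real m * (real d)^2 < real m * (s+1)^2"
    using mpos by (rule mult_strict_left_mono)
  also have "\<dots> = real m * s^2 + 2 * (real m * s) + real m" by (simp add: power2_eq_square algebra_simps)
  also have "\<dots> \<le> 4 * b" using \<open>real m * s^2 = b\<close> msb m_lt p_le_b by linarith
  also have "\<dots> \<le> real N" using b_le by simp
  finally have "real (m * d * d) < real N" by (simp add: power2_eq_square)
  hence mdN: "m * d * d < N" by linarith
  have disj: "(\<lambda>n. (minv * int r - int n) mod int N) ` {1..d}
           \<inter> (\<lambda>n. (- int d * int n) mod int N) ` {1..d} = {}"
  proof (rule ccontr)
    assume "\<not> ?thesis"
    then obtain n n' where nn: "n \<in> {1..d}" "n' \<in> {1..d}"
      "(minv * int r - int n) mod int N = (- int d * int n') mod int N" by blast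
    hence c: "[minv * int r - int n = - int d * int n'] (mod int N)" by (simp add: cong_def)
    have "[int m * (minv * int r - int n) = int m * (- int d * int n')] (mod int N)"
      using c by (rule cong_scalar_left)
    moreover have "[int m * (minv * int r - int n) = int r - int m * int n] (mod int N)"
    proof -
      have "[int m * minv * int r = 1 * int r] (mod int N)" using inv by (rule cong_scalar_right)
      hence "[int m * minv * int r - int m * int n = int r - int m * int n] (mod int N)"
        by (intro cong_diff) auto
      thus ?thesis by (simp add: algebra_simps)
    qed
    ultimately have "[int r - int m * int n = int m * (- int d * int n')] (mod int N)"
      by (meson cong_sym cong_trans)
    hence "int N dvd (int r - int m * int n) - int m * (- int d * int n')"
      by (simp add: cong_iff_dvd_diff)
    hence dv: "int N dvd int r - int m * int n + int m * int d * int n'"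
      by (simp add: algebra_simps)
    have "int m * int n \<le> int m * int d" using nn by (intro mult_left_mono) auto
    moreover have "int m * int d * 1 \<le> int m * int d * int n'" using nn by (intro mult_left_mono) auto
    ultimately have gt: "int r - int m * int n + int m * int d * int n' > 0" using rpos by linarith
    have "int m * int d * int n' \<le> int m * int d * int d" using nn by (intro mult_left_mono) auto
    moreover have "int m * 1 \<le> int m * int n" using nn by (intro mult_left_mono) auto
    moreover have "int m * int d * int d < int N" using mdN by (simp flip: of_nat_mult)
    moreover have "int r < int m" using rlt by simp
    ultimately have lt: "int r - int m * int n + int m * int d * int n' < int N" by linarith
    from dv gt lt show False using zdvd_imp_le by fastforce
  qed
  define i where "i = q div d + 1"
  define j where "j = d - q mod d"
  have i_in: "i \<in> {1..d}" unfolding i_def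
  proof -
    have "q div d < d" using qlt d1 by (simp add: div_less_iff_less_mult)
    thus "q div d + 1 \<in> {1..d}" by simp
  qed
  have j_in: "j \<in> {1..d}" unfolding j_def using d1
    by (simp add: Suc_leI diff_less_mono2 le_diff_conv2 less_imp_le_nat)
  have dij: "int d * int i - int j = int q"
  proof -
    have "q mod d < d" using d1 by simp
    hence "int j = int d - int (q mod d)" unfolding j_def by simp
    moreover have "int q = int d * int (q div d) + int (q mod d)"
    proof -
      have "q = d * (q div d) + q mod d" by simp
      thus ?thesis using arg_cong[of _ _ int] by (metis of_nat_add of_nat_mult)
    qed
    ultimately show ?thesis unfolding i_def by (simp add: algebra_simps)
  qed
  have pX: "int p dvd minv * int r + int q"
  proof -
    have pN: "int p dvd int N" using p_dvd by simp
    have invp: "[int m * minv = 1] (mod int p)" using cong_dvd_modulus[OF inv pN] .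
    have "[int m * minv * int r = 1 * int r] (mod int p)" using invp by (rule cong_scalar_right)
    hence "[int m * minv * int r + int m * int q = int r + int m * int q] (mod int p)"
      by (intro cong_add) auto
    moreover have "int r + int m * int q = int p" using pqr by simp
    ultimately have "int p dvd int m * (minv * int r + int q)"
      by (simp add: cong_0_iff[symmetric] algebra_simps cong_def)
    moreover have "\<not> p dvd m" using m_lt m_ge by (auto dest: dvd_imp_le)
    hence "\<not> int p dvd int m" by simp
    moreover have "prime (int p)" using p_prime by simp
    ultimately show ?thesis using prime_dvd_mult_iff by blast
  qed
  have cg: "[minv * int r - int j = - int d * int i] (mod int p)"
  proof -
    have e: "(minv * int r - int j) - (- int d * int i) = minv * int r + int q" using dij by linarith
    show ?thesis unfolding cong_iff_dvd_diff e using pX .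
  qed
  have ex: "\<exists>i\<in>{1..d}. \<exists>j\<in>{1..d}. [minv * int r - int j = - int d * int i] (mod int p)"
    using i_in j_in cg by blast
  have r1: "(\<lambda>n. (minv * int r - int n) mod int N) ` {1..d} \<subseteq> {0..<int N}" using Npos by auto
  have r2: "(\<lambda>n. (- int d * int n) mod int N) ` {1..d} \<subseteq> {0..<int N}" using Npos by auto
  have cov: "covering_solution N d (\<lambda>n. (minv * int r - int n) mod int N)
                              (\<lambda>n. (- int d * int n) mod int N)"
    unfolding covering_solution_def
  proof (intro conjI r1 r2 disj impI)
    have "[(minv * int r - int j) mod int N = (- int d * int i) mod int N] (mod int p)"
    proof -
      have pN: "int p dvd int N" using p_dvd by simp
      show ?thesis using cg unfolding cong_def mod_mod_cancel[OF pN] .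
    qed
    thus "\<exists>i\<in>{1..d}. \<exists>j\<in>{1..d}. \<exists>p. prime p \<and> p dvd N \<and>
       [(minv * int r - int i) mod int N = (- int d * int j) mod int N] (mod int p)"
      using i_in j_in p_prime p_dvd by blast
  qed
  show ?thesis using r1 r2 disj ex cov by blast
qed

end
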